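(* Let $1\le\ell\le n$ and fix $m$ with $0\le m\le\ell$. For every $v\in\bigoplus_{s=0}^m\mathcal{Y}_s$, \[\sum_{i,j=1}^n\mathbf{V}_{ij}(v)\ge\big((\ell-m)n-\ell^2\big)\|v\|^2.\]
   Context: Vectors in $\mathbb{R}^{\binom{n}{\ell}}$ are indexed by $\ell$-subsets of $[n]$. For a sequence $\varphi=(a_1,b_1,\ldots,a_s,b_s)$ of $2s$ distinct elements of $[n]$, $u^\varphi_S=\prod_{i=1}^s(\mathbf{1}_{a_i\in S}-\mathbf{1}_{b_i\in S})$ for $|S|=\ell$ ($u^\varnothing$ is the all-ones vector), and $\mathcal{Y}_s=\mathrm{span}\{u^\varphi:|\varphi|=2s\}$. The voting matrix $\mathbf{V}(v)$ is the symmetric $n\times n$ matrix with $\mathbf{V}_{ii}(v)=0$ and $\mathbf{V}_{ij}(v)=\frac12\sum_{|S|=|T|=\ell}v_Sv_T\mathbf{1}_{S\triangle T=\{i,j\}}$ for $i\ne j$. *)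

theory Defs
  imports "HOL-Analysis.Analysis"
begin

text \<open>Vectors in R^(n choose l) are functions from nat sets to reals; only the values
on l-subsets of {1..n} matter (and the u-vectors vanish elsewhere).\<close>

definition lsubsets :: "nat \<Rightarrow> nat \<Rightarrow> nat set set" where
  "lsubsets n l = {S. S \<subseteq> {1..n} \<and> card S = l}"

definition ind :: "bool \<Rightarrow> real" where
  "ind b = (if b then 1 else 0)"

text \<open>phi = [a_1, b_1, ..., a_s, b_s] as a list of length 2s.\<close>
definition uvec :: "nat \<Rightarrow> nat \<Rightarrow> nat list \<Rightarrow> nat set \<Rightarrow> real" where
  "uvec n l phi S = (if S \<in> lsubsets n l then
      (\<Prod>i<length phi div 2. ind (phi ! (2*i) \<in> S) - ind (phi ! (2*i+1) \<in> S)) else 0)"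

definition seqs :: "nat \<Rightarrow> nat \<Rightarrow> nat list set" where
  "seqs n s = {phi. length phi = 2 * s \<and> distinct phi \<and> (set phi \<subseteq> {1..n})}"

definition fspan :: "('a \<Rightarrow> real) set \<Rightarrow> ('a \<Rightarrow> real) set" where
  "fspan A = {v. \<exists>F c. finite F \<and> F \<subseteq> A \<and> v = (\<lambda>x. \<Sum>u\<in>F. c u * u x)}"

definition Ysp :: "nat \<Rightarrow> nat \<Rightarrow> nat \<Rightarrow> (nat set \<Rightarrow> real) set" where
  "Ysp n l s = fspan (uvec n l ` seqs n s)"

definition Ysum :: "nat \<Rightarrow> nat \<Rightarrow> nat \<Rightarrow> (nat set \<Rightarrow> real) set" where
  "Ysum n l m = fspan (\<Union>s\<in>{0..m}. Ysp n l s)"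

definition voting :: "nat \<Rightarrow> nat \<Rightarrow> (nat set \<Rightarrow> real) \<Rightarrow> nat \<Rightarrow> nat \<Rightarrow> real" where
  "voting n l v i j = (if i = j then 0 else
     (1/2) * (\<Sum>S\<in>lsubsets n l. \<Sum>T\<in>lsubsets n l.
        v S * v T * ind (S - T \<union> (T - S) = {i, j})))"

definition sqnorm :: "nat \<Rightarrow> nat \<Rightarrow> (nat set \<Rightarrow> real) \<Rightarrow> real" where
  "sqnorm n l v = (\<Sum>S\<in>lsubsets n l. (v S)^2)"

end

theory Submission
  imports Defs
begin


lemma ind_eq: "ind b = of_bool b" by (simp add: ind_def)

lemma finite_L: "finite (lsubsets n l)"
  unfolding lsubsets_def by (rule finite_subset[of _ "Pow {1..n}"]) auto

definition Kn :: "nat \<Rightarrow> nat set \<Rightarrow> nat set \<Rightarrow> real" where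
  "Kn n S T = (\<Sum>i\<in>{1..n}. \<Sum>j\<in>{1..n}. if i = j then 0 else ind (S - T \<union> (T - S) = {i,j}))"

definition Aop :: "nat \<Rightarrow> nat \<Rightarrow> (nat set \<Rightarrow> real) \<Rightarrow> nat set \<Rightarrow> real" where
  "Aop n l w S = (\<Sum>T\<in>lsubsets n l. Kn n S T * w T)"

definition eig :: "nat \<Rightarrow> nat \<Rightarrow> real \<Rightarrow> (nat set \<Rightarrow> real) \<Rightarrow> bool" where
  "eig n l mu w = (\<forall>S\<in>lsubsets n l. Aop n l w S = mu * w S)"

definition ip :: "nat \<Rightarrow> nat \<Rightarrow> (nat set \<Rightarrow> real) \<Rightarrow> (nat set \<Rightarrow> real) \<Rightarrow> real" where
  "ip n l f g = (\<Sum>S\<in>lsubsets n l. f S * g S)"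

lemma Kn_sym: "Kn n S T = Kn n T S"
proof -
  have "\<And>i j. (S - T \<union> (T - S) = {i,j}) = (T - S \<union> (S - T) = {i,j})" by blast
  thus ?thesis unfolding Kn_def by (simp only:)
qed

lemma swap4: "(\<Sum>i\<in>I. \<Sum>j\<in>J. \<Sum>S\<in>A. \<Sum>T\<in>B. f i j S T) = (\<Sum>S\<in>A. \<Sum>T\<in>B. \<Sum>i\<in>I. \<Sum>j\<in>J. (f i j S T :: real))"
proof -
  have "(\<Sum>i\<in>I. \<Sum>j\<in>J. \<Sum>S\<in>A. \<Sum>T\<in>B. f i j S T) = (\<Sum>i\<in>I. \<Sum>S\<in>A. \<Sum>j\<in>J. \<Sum>T\<in>B. f i j S T)"
    by (rule sum.cong[OF refl], rule sum.swap)
  also have "\<dots> = (\<Sum>S\<in>A. \<Sum>i\<in>I. \<Sum>j\<in>J. \<Sum>T\<in>B. f i j S T)" by (rule sum.swap)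
  also have "\<dots> = (\<Sum>S\<in>A. \<Sum>i\<in>I. \<Sum>T\<in>B. \<Sum>j\<in>J. f i j S T)"
    by (rule sum.cong[OF refl], rule sum.cong[OF refl], rule sum.swap)
  also have "\<dots> = (\<Sum>S\<in>A. \<Sum>T\<in>B. \<Sum>i\<in>I. \<Sum>j\<in>J. f i j S T)"
    by (rule sum.cong[OF refl], rule sum.swap)
  finally show ?thesis .
qed

lemma Q_eq: "(\<Sum>i=1..n. \<Sum>j=1..n. voting n l v i j)
   = (1/2) * (\<Sum>S\<in>lsubsets n l. \<Sum>T\<in>lsubsets n l. v S * v T * Kn n S T)"
proof -
  have "voting n l v i j = (1/2) * (\<Sum>S\<in>lsubsets n l. \<Sum>T\<in>lsubsets n l.
      v S * v T * (if i = j then 0 else ind (S - T \<union> (T - S) = {i,j})))" for i j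
    by (simp add: voting_def)
  hence "(\<Sum>i=1..n. \<Sum>j=1..n. voting n l v i j) = (1/2) * (\<Sum>i=1..n. \<Sum>j=1..n. \<Sum>S\<in>lsubsets n l. \<Sum>T\<in>lsubsets n l.
      v S * v T * (if i = j then 0 else ind (S - T \<union> (T - S) = {i,j})))"
    by (simp add: sum_distrib_left)
  also have "(\<Sum>i=1..n. \<Sum>j=1..n. \<Sum>S\<in>lsubsets n l. \<Sum>T\<in>lsubsets n l.
      v S * v T * (if i = j then 0 else ind (S - T \<union> (T - S) = {i,j})))
    = (\<Sum>S\<in>lsubsets n l. \<Sum>T\<in>lsubsets n l. \<Sum>i=1..n. \<Sum>j=1..n.
      v S * v T * (if i = j then 0 else ind (S - T \<union> (T - S) = {i,j})))"
    by (rule swap4)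
  also have "\<dots> = (\<Sum>S\<in>lsubsets n l. \<Sum>T\<in>lsubsets n l. v S * v T * Kn n S T)"
    by (simp add: Kn_def sum_distrib_left)
  finally show ?thesis .
qed

lemma eig_sum:
  assumes "finite F" "\<And>y. y \<in> F \<Longrightarrow> eig n l mu (g y)"
  shows "eig n l mu (\<lambda>x. \<Sum>y\<in>F. c y * g y x)"
  unfolding eig_def
proof
  fix S assume S: "S \<in> lsubsets n l"
  have "Aop n l (\<lambda>x. \<Sum>y\<in>F. c y * g y x) S = (\<Sum>y\<in>F. c y * Aop n l (g y) S)"
    unfolding Aop_def by (simp add: sum_distrib_left sum.swap[of _ F] mult.left_commute)
  also have "\<dots> = (\<Sum>y\<in>F. c y * (mu * g y S))"
    using assms(2) S unfolding eig_def by simp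
  also have "\<dots> = mu * (\<Sum>y\<in>F. c y * g y S)"
    by (simp add: sum_distrib_left mult.left_commute)
  finally show "Aop n l (\<lambda>x. \<Sum>y\<in>F. c y * g y x) S = mu * (\<Sum>y\<in>F. c y * g y S)" .
qed

lemma ip_sym_A: "ip n l (Aop n l w) w' = ip n l w (Aop n l w')"
proof -
  have "ip n l (Aop n l w) w' = (\<Sum>S\<in>lsubsets n l. \<Sum>T\<in>lsubsets n l. Kn n S T * w T * w' S)"
    unfolding ip_def Aop_def by (simp add: sum_distrib_right)
  also have "\<dots> = (\<Sum>T\<in>lsubsets n l. \<Sum>S\<in>lsubsets n l. Kn n S T * w T * w' S)"
    by (rule sum.swap)
  also have "\<dots> = ip n l w (Aop n l w')"
    unfolding ip_def Aop_def by (simp add: sum_distrib_left Kn_sym mult_ac)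
  finally show ?thesis .
qed

lemma orth:
  assumes "eig n l mu w" "eig n l mu' w'" "mu \<noteq> mu'"
  shows "ip n l w w' = 0"
proof -
  have "ip n l (Aop n l w) w' = mu * ip n l w w'"
    using assms(1) unfolding eig_def ip_def by (simp add: sum_distrib_left mult_ac)
  moreover have "ip n l w (Aop n l w') = mu' * ip n l w w'"
    using assms(2) unfolding eig_def ip_def by (simp add: sum_distrib_left mult_ac)
  ultimately have "mu * ip n l w w' = mu' * ip n l w w'" using ip_sym_A by metis
  thus ?thesis using assms(3) by simp
qed

lemma ip_sum_left: "ip n l (\<lambda>x. \<Sum>m\<in>M. w m x) g = (\<Sum>m\<in>M. ip n l (w m) g)"
  unfolding ip_def by (simp add: sum_distrib_right sum.swap[of _ M])

lemma ip_sum_right: "ip n l g (\<lambda>x. \<Sum>m\<in>M. w m x) = (\<Sum>m\<in>M. ip n l g (w m))"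
  unfolding ip_def by (simp add: sum_distrib_left sum.swap[of _ M])

lemma ip_nonneg: "ip n l w w \<ge> 0"
  unfolding ip_def by (simp add: sum_nonneg)

lemma Aop_sum: "Aop n l (\<lambda>x. \<Sum>m\<in>M. w m x) S = (\<Sum>m\<in>M. Aop n l (w m) S)"
  unfolding Aop_def by (simp add: sum_distrib_left sum.swap[of _ M])

lemma quad_bound:
  assumes F: "finite F" and E: "\<And>y. y\<in>F \<Longrightarrow> eig n l (mu y) y" and C: "\<And>y. y\<in>F \<Longrightarrow> mu y \<ge> c"
    and v: "v = (\<lambda>x. \<Sum>y\<in>F. cc y * y x)"
  shows "(\<Sum>S\<in>lsubsets n l. \<Sum>T\<in>lsubsets n l. v S * v T * Kn n S T) \<ge> c * ip n l v v"
proof -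
  define M where "M = mu ` F"
  define w where "w = (\<lambda>m x. \<Sum>y\<in>{y\<in>F. mu y = m}. cc y * y x)"
  have fM: "finite M" using F M_def by simp
  have weig: "eig n l m (w m)" for m
    unfolding w_def by (rule eig_sum) (use F E in auto)
  have vd: "v = (\<lambda>x. \<Sum>m\<in>M. w m x)"
    unfolding v w_def M_def by (rule ext, rule sum.image_gen[OF F])
  have ipw: "ip n l v (w m) = ip n l (w m) (w m)" if "m \<in> M" for m
  proof -
    have "ip n l v (w m) = (\<Sum>m'\<in>M. ip n l (w m') (w m))"
      by (subst vd, rule ip_sum_left)
    also have "\<dots> = (\<Sum>m'\<in>M. if m' = m then ip n l (w m) (w m) else 0)"
      by (rule sum.cong[OF refl]) (use orth[OF weig weig] in auto)
    also have "\<dots> = ip n l (w m) (w m)" using that fM by simp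
    finally show ?thesis .
  qed
  have "(\<Sum>S\<in>lsubsets n l. \<Sum>T\<in>lsubsets n l. v S * v T * Kn n S T) = ip n l v (Aop n l v)"
    unfolding ip_def Aop_def by (simp add: sum_distrib_left mult_ac)
  also have "\<dots> = ip n l v (\<lambda>x. \<Sum>m\<in>M. m * w m x)"
    unfolding ip_def
  proof (rule sum.cong[OF refl])
    fix S assume S: "S \<in> lsubsets n l"
    have "Aop n l v S = (\<Sum>m\<in>M. Aop n l (w m) S)" by (subst vd, rule Aop_sum)
    also have "\<dots> = (\<Sum>m\<in>M. m * w m S)" using weig S unfolding eig_def by simp
    finally show "v S * Aop n l v S = v S * (\<Sum>m\<in>M. m * w m S)" by simp
  qed
  also have "\<dots> = (\<Sum>m\<in>M. m * ip n l v (w m))"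
    by (subst ip_sum_right) (simp add: ip_def sum_distrib_left mult_ac)
  also have "\<dots> = (\<Sum>m\<in>M. m * ip n l (w m) (w m))"
    using ipw by simp
  also have "\<dots> \<ge> (\<Sum>m\<in>M. c * ip n l (w m) (w m))"
    by (rule sum_mono, rule mult_right_mono) (use C M_def ip_nonneg in auto)
  moreover have "(\<Sum>m\<in>M. c * ip n l (w m) (w m)) = c * ip n l v v"
  proof -
    have "ip n l v v = (\<Sum>m\<in>M. ip n l v (w m))" by (subst (2) vd, rule ip_sum_right)
    also have "\<dots> = (\<Sum>m\<in>M. ip n l (w m) (w m))" using ipw by simp
    finally show ?thesis by (simp add: sum_distrib_left)
  qed
  ultimately show ?thesis by simp
qed



definition pa :: "nat list \<Rightarrow> nat \<Rightarrow> nat" where "pa phi k = phi ! (2*k)"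
definition pb :: "nat list \<Rightarrow> nat \<Rightarrow> nat" where "pb phi k = phi ! (2*k+1)"
definition fk :: "nat list \<Rightarrow> nat \<Rightarrow> nat set \<Rightarrow> real" where
  "fk phi k S = ind (pa phi k \<in> S) - ind (pb phi k \<in> S)"
definition UU :: "nat list \<Rightarrow> nat set \<Rightarrow> real" where
  "UU phi S = (\<Prod>k<length phi div 2. fk phi k S)"

lemma uvec_eq: "uvec n l phi S = (if S \<in> lsubsets n l then UU phi S else 0)"
  unfolding uvec_def UU_def fk_def pa_def pb_def by simp

lemma seqs_facts:
  assumes "phi \<in> seqs n s"
  shows "length phi div 2 = s"
    and "\<And>k. k < s \<Longrightarrow> pa phi k \<in> set phi \<and> pb phi k \<in> set phi"
    and "\<And>k. k < s \<Longrightarrow> pa phi k \<in> {1..n} \<and> pb phi k \<in> {1..n}"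
    and "\<And>x. x \<in> set phi \<Longrightarrow> \<exists>k<s. x = pa phi k \<or> x = pb phi k"
    and "\<And>k k'. k < s \<Longrightarrow> k' < s \<Longrightarrow> pa phi k = pa phi k' \<longleftrightarrow> k = k'"
    and "\<And>k k'. k < s \<Longrightarrow> k' < s \<Longrightarrow> pb phi k = pb phi k' \<longleftrightarrow> k = k'"
    and "\<And>k k'. k < s \<Longrightarrow> k' < s \<Longrightarrow> pa phi k \<noteq> pb phi k'"
    and "distinct phi" "set phi \<subseteq> {1..n}" "length phi = 2 * s"
proof -
  have L: "length phi = 2 * s" using assms unfolding seqs_def by auto
  have D: "distinct phi" using assms unfolding seqs_def by auto
  have Sb: "set phi \<subseteq> {1..n}" using assms unfolding seqs_def by auto
  show "length phi div 2 = s" using L by simp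
  show A: "k < s \<Longrightarrow> pa phi k \<in> set phi \<and> pb phi k \<in> set phi" for k
    using L unfolding pa_def pb_def by auto
  show "k < s \<Longrightarrow> pa phi k \<in> {1..n} \<and> pb phi k \<in> {1..n}" for k
    using A Sb by blast
  show "\<exists>k<s. x = pa phi k \<or> x = pb phi k" if xin: "x \<in> set phi" for x
  proof -
    obtain p where p: "p < 2 * s" "x = phi ! p" using xin L by (auto simp: in_set_conv_nth)
    have "p = 2*(p div 2) \<or> p = 2*(p div 2)+1" by presburger
    moreover have "p div 2 < s" using p by auto
    ultimately show ?thesis using p unfolding pa_def pb_def by (metis (no_types))
  qed
  show "k < s \<Longrightarrow> k' < s \<Longrightarrow> pa phi k = pa phi k' \<longleftrightarrow> k = k'" for k k'
    using D L unfolding pa_def by (auto simp: nth_eq_iff_index_eq)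
  show "k < s \<Longrightarrow> k' < s \<Longrightarrow> pb phi k = pb phi k' \<longleftrightarrow> k = k'" for k k'
    using D L unfolding pb_def by (auto simp: nth_eq_iff_index_eq)
  show "k < s \<Longrightarrow> k' < s \<Longrightarrow> pa phi k \<noteq> pb phi k'" for k k'
  proof
    assume "k < s" "k' < s" "pa phi k = pb phi k'"
    hence "2*k = 2*k'+1" using D L unfolding pa_def pb_def by (simp add: nth_eq_iff_index_eq)
    thus False by presburger
  qed
  show "distinct phi" "set phi \<subseteq> {1..n}" "length phi = 2 * s" using D Sb L by auto
qed

definition samepair :: "nat list \<Rightarrow> nat \<Rightarrow> nat \<Rightarrow> bool" where
  "samepair phi i j = (\<exists>k<length phi div 2. (i = pa phi k \<and> j = pb phi k) \<or> (i = pb phi k \<and> j = pa phi k))"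

definition good :: "nat list \<Rightarrow> nat set \<Rightarrow> bool" where
  "good phi S = (\<forall>k<length phi div 2. (pa phi k \<in> S) \<noteq> (pb phi k \<in> S))"

lemma val_c:
  assumes ph: "phi \<in> seqs n s" and g: "good phi S" and i: "i \<in> S" and j: "j \<notin> S"
  shows "UU phi (insert j (S - {i})) = UU phi S * (ind (i \<notin> set phi \<and> j \<notin> set phi) - ind (samepair phi i j))"
proof -
  note F = seqs_facts[OF ph]
  let ?T = "insert j (S - {i})"
  have g': "\<And>k. k < s \<Longrightarrow> (pa phi k \<in> S) \<noteq> (pb phi k \<in> S)" using g F(1) unfolding good_def by auto
  have ij: "i \<noteq> j" using i j by auto
  show ?thesis
  proof (cases "i \<notin> set phi \<and> j \<notin> set phi")
    case True
    have "fk phi k ?T = fk phi k S" if "k < s" for k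
    proof -
      have "pa phi k \<noteq> i" "pa phi k \<noteq> j" "pb phi k \<noteq> i" "pb phi k \<noteq> j"
        using F(2)[OF that] True by auto
      thus ?thesis unfolding fk_def by auto
    qed
    hence "UU phi ?T = UU phi S" unfolding UU_def F(1) by (intro prod.cong) auto
    moreover have "\<not> samepair phi i j" using True F(2) unfolding samepair_def F(1) by auto
    ultimately show ?thesis using True by (simp add: ind_def)
  next
    case nP: False
    show ?thesis
    proof (cases "samepair phi i j")
      case True
      then obtain k where k: "k < s" "(i = pa phi k \<and> j = pb phi k) \<or> (i = pb phi k \<and> j = pa phi k)"
        unfolding samepair_def F(1) by auto
      have other: "fk phi k' ?T = fk phi k' S" if "k' < s" "k' \<noteq> k" for k'
      proof -
        have "pa phi k' \<noteq> i" "pa phi k' \<noteq> j" "pb phi k' \<noteq> i" "pb phi k' \<noteq> j"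
          using k that F(5)[OF k(1) that(1)] F(6)[OF k(1) that(1)] F(7)[OF k(1) that(1)] F(7)[OF that(1) k(1)]
          by auto
        thus ?thesis unfolding fk_def by auto
      qed
      have kk: "fk phi k ?T = - fk phi k S"
        using k g'[OF k(1)] i j ij unfolding fk_def by (auto simp: ind_def)
      have "UU phi ?T = fk phi k ?T * (\<Prod>k'\<in>{..<s}-{k}. fk phi k' ?T)"
        unfolding UU_def F(1) using k(1) by (simp add: prod.remove)
      also have "\<dots> = - fk phi k S * (\<Prod>k'\<in>{..<s}-{k}. fk phi k' S)"
      proof -
        have "(\<Prod>k'\<in>{..<s}-{k}. fk phi k' ?T) = (\<Prod>k'\<in>{..<s}-{k}. fk phi k' S)"
          by (rule prod.cong) (auto simp: other)
        thus ?thesis using kk by simp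
      qed
      also have "\<dots> = - UU phi S"
        unfolding UU_def F(1) using k(1) by (simp add: prod.remove)
      finally show ?thesis using True nP by (auto simp: ind_def)
    next
      case nS: False
      have "\<exists>k<s. fk phi k ?T = 0"
      proof (cases "i \<in> set phi")
        case True
        then obtain k where k: "k < s" "i = pa phi k \<or> i = pb phi k" using F(4) by blast
        have "j \<noteq> pb phi k" if "i = pa phi k" using nS k that unfolding samepair_def F(1) by auto
        moreover have "j \<noteq> pa phi k" if "i = pb phi k" using nS k that unfolding samepair_def F(1) by auto
        ultimately have "fk phi k ?T = 0"
          using k g'[OF k(1)] i j ij unfolding fk_def by (auto simp: ind_def)
        thus ?thesis using k by auto
      next
        case False
        hence jP: "j \<in> set phi" using nP by auto
        then obtain k where k: "k < s" "j = pa phi k \<or> j = pb phi k" using F(4) by blast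
        have "fk phi k ?T = 0"
          using k g'[OF k(1)] i j ij False F(2)[OF k(1)] unfolding fk_def by (auto simp: ind_def)
        thus ?thesis using k by auto
      qed
      hence "UU phi ?T = 0" unfolding UU_def F(1) by auto
      thus ?thesis using nS nP by (auto simp: ind_def)
    qed
  qed
qed



lemma Aop_vanish:
  assumes "\<And>X. X \<notin> lsubsets n l \<Longrightarrow> u X = 0"
  shows "Aop n l u S = (\<Sum>i\<in>{1..n}. \<Sum>j\<in>{1..n}. if i = j then 0 else u (S - {i,j} \<union> ({i,j} - S)))"
proof -
  have key: "(\<Sum>T\<in>lsubsets n l. ind (S - T \<union> (T - S) = {i,j}) * u T) = u (S - {i,j} \<union> ({i,j} - S))" for i j
  proof -
    let ?X = "S - {i,j} \<union> ({i,j} - S)"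
    have e: "(S - T \<union> (T - S) = {i,j}) = (T = ?X)" for T by blast
    have "(\<Sum>T\<in>lsubsets n l. ind (S - T \<union> (T - S) = {i,j}) * u T) = (\<Sum>T\<in>lsubsets n l. if T = ?X then u T else 0)"
      by (rule sum.cong[OF refl]) (simp only: e ind_def, simp)
    also have "\<dots> = (if ?X \<in> lsubsets n l then u ?X else 0)" by (simp add: finite_L)
    also have "\<dots> = u ?X" using assms by auto
    finally show ?thesis .
  qed
  have "Aop n l u S = (\<Sum>T\<in>lsubsets n l. \<Sum>i\<in>{1..n}. \<Sum>j\<in>{1..n}. (if i = j then 0 else ind (S - T \<union> (T - S) = {i,j})) * u T)"
    unfolding Aop_def Kn_def by (simp add: sum_distrib_right)
  also have "\<dots> = (\<Sum>i\<in>{1..n}. \<Sum>j\<in>{1..n}. \<Sum>T\<in>lsubsets n l. (if i = j then 0 else ind (S - T \<union> (T - S) = {i,j})) * u T)"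
    by (subst sum.swap, rule sum.cong[OF refl], rule sum.swap)
  also have "\<dots> = (\<Sum>i\<in>{1..n}. \<Sum>j\<in>{1..n}. if i = j then 0 else u (S - {i,j} \<union> ({i,j} - S)))"
    by (rule sum.cong[OF refl], rule sum.cong[OF refl]) (simp add: key)
  finally show ?thesis .
qed

lemma uvec_vanish: "X \<notin> lsubsets n l \<Longrightarrow> uvec n l phi X = 0"
  by (simp add: uvec_eq)

definition sw :: "nat \<Rightarrow> nat \<Rightarrow> nat \<Rightarrow> nat" where
  "sw a b x = (if x = a then b else if x = b then a else x)"

lemma sw_sw[simp]: "sw a b (sw a b x) = x" unfolding sw_def by auto
lemma sw_mem: "y \<in> sw a b ` Z \<longleftrightarrow> sw a b y \<in> Z"
  by (metis image_eqI imageE sw_sw)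
lemma sw_inj: "inj (sw a b)" by (metis injI sw_sw)
lemma sw_eq_iff[simp]: "sw a b x = sw a b y \<longleftrightarrow> x = y" by (metis sw_sw)

lemma uvec_sw:
  assumes ph: "phi \<in> seqs n s" and k: "k < s"
  shows "uvec n l phi (sw (pa phi k) (pb phi k) ` X) = - uvec n l phi X"
proof -
  note F = seqs_facts[OF ph]
  let ?a = "pa phi k" and ?b = "pb phi k"
  let ?f = "sw ?a ?b"
  have ab: "?a \<in> {1..n}" "?b \<in> {1..n}" "?a \<noteq> ?b" using F(3)[OF k] F(7)[OF k k] by auto
  have sub: "?f ` X \<subseteq> {1..n} \<longleftrightarrow> X \<subseteq> {1..n}"
  proof
    assume "?f ` X \<subseteq> {1..n}"
    thus "X \<subseteq> {1..n}" using ab unfolding sw_def by (force split: if_splits)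
  next
    assume "X \<subseteq> {1..n}"
    thus "?f ` X \<subseteq> {1..n}" using ab unfolding sw_def by auto
  qed
  have cd: "card (?f ` X) = card X" by (rule card_image, rule inj_on_subset[OF sw_inj], simp)
  have L: "?f ` X \<in> lsubsets n l \<longleftrightarrow> X \<in> lsubsets n l"
    unfolding lsubsets_def using sub cd by auto
  have fkk: "fk phi k (?f ` X) = - fk phi k X"
    unfolding fk_def sw_mem using ab by (simp add: sw_def)
  have fko: "fk phi k' (?f ` X) = fk phi k' X" if "k' < s" "k' \<noteq> k" for k'
  proof -
    have "sw ?a ?b (pa phi k') = pa phi k'" "sw ?a ?b (pb phi k') = pb phi k'"
      using F(5)[OF that(1) k] F(6)[OF that(1) k] F(7)[OF that(1) k] F(7)[OF k that(1)] that
      unfolding sw_def by auto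
    thus ?thesis unfolding fk_def sw_mem by simp
  qed
  have "UU phi (?f ` X) = - UU phi X"
  proof -
    have "UU phi (?f ` X) = fk phi k (?f ` X) * (\<Prod>k'\<in>{..<s}-{k}. fk phi k' (?f ` X))"
      unfolding UU_def F(1) using k by (simp add: prod.remove)
    also have "(\<Prod>k'\<in>{..<s}-{k}. fk phi k' (?f ` X)) = (\<Prod>k'\<in>{..<s}-{k}. fk phi k' X)"
      by (rule prod.cong) (auto simp: fko)
    also have "fk phi k (?f ` X) * (\<Prod>k'\<in>{..<s}-{k}. fk phi k' X) = - UU phi X"
      unfolding UU_def F(1) fkk using k by (simp add: prod.remove)
    finally show ?thesis .
  qed
  thus ?thesis unfolding uvec_eq using L by simp
qed

lemma bad_sum:
  assumes ph: "phi \<in> seqs n s" and k: "k < s" and bad: "(pa phi k \<in> S) = (pb phi k \<in> S)"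
  shows "(\<Sum>i\<in>{1..n}. \<Sum>j\<in>{1..n}. if i = j then 0 else uvec n l phi (S - {i,j} \<union> ({i,j} - S))) = 0"
proof -
  note F = seqs_facts[OF ph]
  let ?a = "pa phi k" and ?b = "pb phi k"
  let ?f = "sw ?a ?b"
  let ?G = "\<lambda>i j. if i = j then 0 else uvec n l phi (S - {i,j} \<union> ({i,j} - S))"
  have ab: "?a \<in> {1..n}" "?b \<in> {1..n}" using F(3)[OF k] by auto
  have img: "?f ` {1..n} = {1..n}"
  proof -
    have "?f ` {1..n} \<subseteq> {1..n}" using ab unfolding sw_def by auto
    moreover have "{1..n} \<subseteq> ?f ` {1..n}" using ab unfolding sw_mem[symmetric, of _ _ _ "{1..n}"]
      by (auto simp: sw_mem sw_def)
    ultimately show ?thesis by blast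
  qed
  have Smem: "?f y \<in> S \<longleftrightarrow> y \<in> S" for y using bad unfolding sw_def by auto
  have sdimg: "S - {?f i, ?f j} \<union> ({?f i, ?f j} - S) = ?f ` (S - {i,j} \<union> ({i,j} - S))" for i j
  proof -
    have yy: "y \<in> S - {?f i, ?f j} \<union> ({?f i, ?f j} - S) \<longleftrightarrow> ?f y \<in> S - {i,j} \<union> ({i,j} - S)" for y
    proof -
      have "y = ?f i \<longleftrightarrow> ?f y = i" "y = ?f j \<longleftrightarrow> ?f y = j" by (metis sw_sw)+
      thus ?thesis using Smem[of y] by auto
    qed
    show ?thesis apply (rule set_eqI) apply (simp only: sw_mem) apply (rule yy) done
  qed
  have Gf: "?G (?f i) (?f j) = - ?G i j" for i j
    using sdimg[of i j] uvec_sw[OF ph k] by simp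
  have reidx: "(\<Sum>i\<in>{1..n}. h i) = (\<Sum>i\<in>{1..n}. h (?f i))" for h :: "nat \<Rightarrow> real"
  proof -
    have "(\<Sum>i\<in>{1..n}. h i) = (\<Sum>i\<in>?f ` {1..n}. h i)" using img by simp
    also have "\<dots> = (\<Sum>i\<in>{1..n}. h (?f i))" by (rule sum.reindex_cong[OF inj_on_subset[OF sw_inj]]) auto
    finally show ?thesis .
  qed
  have "(\<Sum>i\<in>{1..n}. \<Sum>j\<in>{1..n}. ?G i j) = (\<Sum>i\<in>{1..n}. \<Sum>j\<in>{1..n}. ?G (?f i) (?f j))"
    by (subst reidx, rule sum.cong[OF refl], rule reidx)
  also have "\<dots> = - (\<Sum>i\<in>{1..n}. \<Sum>j\<in>{1..n}. ?G i j)"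
    by (simp only: Gf sum_negf)
  finally show ?thesis by simp
qed



definition lam :: "nat \<Rightarrow> nat \<Rightarrow> nat \<Rightarrow> real" where
  "lam n l s = (real l - real s) * (real n - real l - real s) - real s"

lemma good_sum:
  assumes ph: "phi \<in> seqs n s" and SL: "S \<in> lsubsets n l" and g: "good phi S"
  shows "(\<Sum>i\<in>{1..n}. \<Sum>j\<in>{1..n}. if i = j then 0 else uvec n l phi (S - {i,j} \<union> ({i,j} - S)))
     = 2 * lam n l s * UU phi S"
proof -
  note F = seqs_facts[OF ph]
  let ?P = "set phi"
  let ?R = "{1..n} - S"
  define A1 where "A1 = (\<lambda>i j. i \<notin> ?P \<and> j \<notin> ?P \<and> (i \<in> S \<longleftrightarrow> j \<notin> S))"
  have g': "\<And>k. k < s \<Longrightarrow> (pa phi k \<in> S) \<noteq> (pb phi k \<in> S)" using g F(1) unfolding good_def by auto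
  have Ssub: "S \<subseteq> {1..n}" and cS: "card S = l" using SL unfolding lsubsets_def by auto
  have fS: "finite S" using Ssub finite_subset by blast
  have sp_sym: "samepair phi i j = samepair phi j i" for i j unfolding samepair_def by blast
  have sp_x: "samepair phi i j \<Longrightarrow> (i \<in> S \<longleftrightarrow> j \<notin> S)" for i j
    unfolding samepair_def F(1) using g' by blast
  have vc: "uvec n l phi (S - {i,j} \<union> ({i,j} - S)) = UU phi S * (ind (A1 i j) - ind (samepair phi i j))"
    if i: "i \<in> S" and j: "j \<in> {1..n}" "j \<notin> S" for i j
  proof -
    have e: "S - {i,j} \<union> ({i,j} - S) = insert j (S - {i})" using i j by auto
    have "card (insert j (S - {i})) = l"
      using i j fS cS by (simp add: card_insert_disjoint) (metis One_nat_def Suc_pred card_gt_0_iff emptyE)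
    hence "insert j (S - {i}) \<in> lsubsets n l" using i j Ssub unfolding lsubsets_def by auto
    thus ?thesis unfolding e uvec_eq using val_c[OF ph g i j(2)] i j unfolding A1_def by simp
  qed
  have val: "(if i = j then 0 else uvec n l phi (S - {i,j} \<union> ({i,j} - S)))
      = UU phi S * (ind (A1 i j) - ind (samepair phi i j))" if i: "i \<in> {1..n}" and j: "j \<in> {1..n}" for i j
  proof (cases "i = j")
    case True
    thus ?thesis using sp_x[of i i] unfolding A1_def by (auto simp: ind_def)
  next
    case ij: False
    consider "i \<in> S" "j \<in> S" | "i \<notin> S" "j \<notin> S" | "i \<in> S" "j \<notin> S" | "i \<notin> S" "j \<in> S" by blast
    thus ?thesis
    proof cases
      case 1
      have e: "S - {i,j} \<union> ({i,j} - S) = S - {i,j}" using 1 by auto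
      have "card (S - {i,j}) < card S" using 1 fS by (intro psubset_card_mono) auto
      hence "S - {i,j} \<notin> lsubsets n l" using cS unfolding lsubsets_def by auto
      thus ?thesis unfolding e uvec_eq using ij 1 sp_x[of i j] unfolding A1_def by (auto simp: ind_def)
    next
      case 2
      have e: "S - {i,j} \<union> ({i,j} - S) = S \<union> {i,j}" using 2 by auto
      have "card S < card (S \<union> {i,j})" using 2 fS by (intro psubset_card_mono) auto
      hence "S \<union> {i,j} \<notin> lsubsets n l" using cS unfolding lsubsets_def by auto
      thus ?thesis unfolding e uvec_eq using ij 2 sp_x[of i j] unfolding A1_def by (auto simp: ind_def)
    next
      case 3
      thus ?thesis using vc[of i j] ij j by simp
    next
      case 4
      have "{i,j} = {j,i}" by auto
      hence "uvec n l phi (S - {i,j} \<union> ({i,j} - S)) = uvec n l phi (S - {j,i} \<union> ({j,i} - S))" by simp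
      also have "\<dots> = UU phi S * (ind (A1 j i) - ind (samepair phi j i))" using vc[of j i] 4 i by simp
      also have "A1 j i = A1 i j" unfolding A1_def by auto
      finally show ?thesis using ij sp_sym[of i j] by simp
    qed
  qed
  have "(\<Sum>i\<in>{1..n}. \<Sum>j\<in>{1..n}. if i = j then 0 else uvec n l phi (S - {i,j} \<union> ({i,j} - S)))
      = (\<Sum>i\<in>{1..n}. \<Sum>j\<in>{1..n}. UU phi S * (ind (A1 i j) - ind (samepair phi i j)))"
    by (intro sum.cong refl) (simp add: val)
  also have "\<dots> = UU phi S * ((\<Sum>i\<in>{1..n}. \<Sum>j\<in>{1..n}. ind (A1 i j)) - (\<Sum>i\<in>{1..n}. \<Sum>j\<in>{1..n}. ind (samepair phi i j)))"
    by (simp add: sum_distrib_left sum_subtractf right_diff_distrib)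
  also have "(\<Sum>i\<in>{1..n}. \<Sum>j\<in>{1..n}. ind (A1 i j)) = real (card (({1..n} \<times> {1..n}) \<inter> {p. A1 (fst p) (snd p)}))"
    unfolding ind_eq by (subst sum.cartesian_product) (simp add: case_prod_beta)
  also have "({1..n} \<times> {1..n}) \<inter> {p. A1 (fst p) (snd p)} = (S - ?P) \<times> (?R - ?P) \<union> (?R - ?P) \<times> (S - ?P)"
    using Ssub unfolding A1_def by auto
  also have "card \<dots> = 2 * card (S - ?P) * card (?R - ?P)"
    by (subst card_Un_disjoint) (auto simp: card_cartesian_product fS)
  also have "(\<Sum>i\<in>{1..n}. \<Sum>j\<in>{1..n}. ind (samepair phi i j)) = real (card (({1..n} \<times> {1..n}) \<inter> {p. samepair phi (fst p) (snd p)}))"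
    unfolding ind_eq by (subst sum.cartesian_product) (simp add: case_prod_beta)
  also have "({1..n} \<times> {1..n}) \<inter> {p. samepair phi (fst p) (snd p)}
      = (\<lambda>k. (pa phi k, pb phi k)) ` {..<s} \<union> (\<lambda>k. (pb phi k, pa phi k)) ` {..<s}"
    using F(3) unfolding samepair_def F(1) by auto
  also have "card \<dots> = 2 * s"
  proof -
    have i1: "inj_on (\<lambda>k. (pa phi k, pb phi k)) {..<s}" using F(5) by (auto simp: inj_on_def)
    have i2: "inj_on (\<lambda>k. (pb phi k, pa phi k)) {..<s}" using F(6) by (auto simp: inj_on_def)
    have d: "(\<lambda>k. (pa phi k, pb phi k)) ` {..<s} \<inter> (\<lambda>k. (pb phi k, pa phi k)) ` {..<s} = {}"
      using F(7) by auto
    show ?thesis by (subst card_Un_disjoint) (auto simp: d card_image[OF i1] card_image[OF i2])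
  qed
  finally have main: "(\<Sum>i\<in>{1..n}. \<Sum>j\<in>{1..n}. if i = j then 0 else uvec n l phi (S - {i,j} \<union> ({i,j} - S)))
      = UU phi S * (real (2 * card (S - ?P) * card (?R - ?P)) - real (2 * s))" .
  have SP: "S \<inter> ?P = (\<lambda>k. if pa phi k \<in> S then pa phi k else pb phi k) ` {..<s}"
  proof
    show "S \<inter> ?P \<subseteq> (\<lambda>k. if pa phi k \<in> S then pa phi k else pb phi k) ` {..<s}"
    proof
      fix x assume x: "x \<in> S \<inter> ?P"
      then obtain k where k: "k < s" "x = pa phi k \<or> x = pb phi k" using F(4) by blast
      hence "x = (if pa phi k \<in> S then pa phi k else pb phi k)" using x g'[OF k(1)] by auto
      thus "x \<in> (\<lambda>k. if pa phi k \<in> S then pa phi k else pb phi k) ` {..<s}" using k by auto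
    qed
    show "(\<lambda>k. if pa phi k \<in> S then pa phi k else pb phi k) ` {..<s} \<subseteq> S \<inter> ?P"
      using g' F(2) by auto
  qed
  have injc: "inj_on (\<lambda>k. if pa phi k \<in> S then pa phi k else pb phi k) {..<s}"
    unfolding inj_on_def using F(5) F(6) F(7) by (auto split: if_splits) (metis lessThan_iff)+
  have cSP: "card (S \<inter> ?P) = s" unfolding SP using card_image[OF injc] by simp
  have cP: "card ?P = 2 * s" using F(8) F(10) by (simp add: distinct_card)
  have c1: "card (S - ?P) = l - s" using cS cSP by (simp add: card_Diff_subset_Int fS)
  have sl: "s \<le> l" using cSP cS fS by (metis card_mono inf_le1)
  have cU: "card (S \<union> ?P) = l + s" using card_Un_Int[OF fS, of ?P] cS cSP cP by simp
  have "?R - ?P = {1..n} - (S \<union> ?P)" by auto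
  hence c2: "card (?R - ?P) = n - (l + s)" using cU Ssub F(9)
    by (simp add: card_Diff_subset finite_subset[OF _ finite_atLeastAtMost])
  have ls: "l + s \<le> n" using cU Ssub F(9) card_mono[of "{1..n}" "S \<union> ?P"] by auto
  have h: "real (2 * (l - s) * (n - (l + s))) = 2 * (real l - real s) * (real n - real l - real s)"
    using sl ls by (simp add: of_nat_diff)
  show ?thesis unfolding main c1 c2 lam_def h by (simp add: algebra_simps)
qed



lemma uvec_eig:
  assumes ph: "phi \<in> seqs n s"
  shows "eig n l (2 * lam n l s) (uvec n l phi)"
  unfolding eig_def
proof
  fix S assume SL: "S \<in> lsubsets n l"
  note F = seqs_facts[OF ph]
  have A: "Aop n l (uvec n l phi) S = (\<Sum>i\<in>{1..n}. \<Sum>j\<in>{1..n}. if i = j then 0 else uvec n l phi (S - {i,j} \<union> ({i,j} - S)))"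
    by (rule Aop_vanish) (rule uvec_vanish)
  show "Aop n l (uvec n l phi) S = 2 * lam n l s * uvec n l phi S"
  proof (cases "good phi S")
    case True
    thus ?thesis unfolding A using good_sum[OF ph SL True] SL by (simp add: uvec_eq)
  next
    case False
    then obtain k where k: "k < s" "(pa phi k \<in> S) = (pb phi k \<in> S)"
      unfolding good_def F(1) by auto
    have "fk phi k S = 0" using k unfolding fk_def by simp
    hence "UU phi S = 0" unfolding UU_def F(1) using k by auto
    thus ?thesis unfolding A using bad_sum[OF ph k] SL by (simp add: uvec_eq)
  qed
qed

lemma Ysp_eig:
  assumes "y \<in> Ysp n l s"
  shows "eig n l (2 * lam n l s) y"
proof -
  obtain F c where F: "finite F" "F \<subseteq> uvec n l ` seqs n s" "y = (\<lambda>x. \<Sum>u\<in>F. c u * u x)"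
    using assms unfolding Ysp_def fspan_def by blast
  have "eig n l (2 * lam n l s) (\<lambda>x. \<Sum>u\<in>F. c u * u x)"
    by (rule eig_sum[where g = "\<lambda>u. u"]) (use F uvec_eig in auto)
  thus ?thesis using F(3) by simp
qed

lemma lam_bound:
  assumes "s \<le> m"
  shows "lam n l s \<ge> (real l - real m) * real n - (real l)^2"
proof -
  have ss: "real s \<le> real s * real s" by (cases s) auto
  have "0 \<le> (real m - real s) * real n" using assms by simp
  thus ?thesis unfolding lam_def using ss by (simp add: algebra_simps power2_eq_square)
qed

theorem lemma7:
  fixes n l m :: nat and v :: "nat set \<Rightarrow> real"
  assumes "1 \<le> l" and "l \<le> n" and "m \<le> l"
    and "v \<in> Ysum n l m"
  shows "(\<Sum>i=1..n. \<Sum>j=1..n. voting n l v i j)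
           \<ge> ((real l - real m) * real n - (real l)^2) * sqnorm n l v"
proof -
  obtain F cc where F: "finite F" "F \<subseteq> (\<Union>s\<in>{0..m}. Ysp n l s)" "v = (\<lambda>x. \<Sum>y\<in>F. cc y * y x)"
    using assms(4) unfolding Ysum_def fspan_def by blast
  define sy where "sy y = (SOME s. s \<in> {0..m} \<and> y \<in> Ysp n l s)" for y
  have sy: "sy y \<in> {0..m} \<and> y \<in> Ysp n l (sy y)" if "y \<in> F" for y
    unfolding sy_def by (rule someI_ex) (use F(2) that in blast)
  let ?c = "(real l - real m) * real n - (real l)^2"
  have "(\<Sum>S\<in>lsubsets n l. \<Sum>T\<in>lsubsets n l. v S * v T * Kn n S T) \<ge> (2 * ?c) * ip n l v v"
  proof (rule quad_bound[OF F(1) _ _ F(3), where mu = "\<lambda>y. 2 * lam n l (sy y)"])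
    fix y assume y: "y \<in> F"
    show "eig n l (2 * lam n l (sy y)) y" using sy[OF y] Ysp_eig by blast
    show "2 * lam n l (sy y) \<ge> 2 * ?c" using sy[OF y] lam_bound[where s="sy y" and m=m and n=n and l=l] by simp
  qed
  moreover have "ip n l v v = sqnorm n l v" unfolding ip_def sqnorm_def by (simp add: power2_eq_square)
  ultimately show ?thesis unfolding Q_eq by (simp add: algebra_simps)
qed

end
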